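(* Let $Y\sim$ exGPD$(\sigma,\xi)$ with $\sigma>0$, and let $u\in\mathbb{R}$ (with $u<\log(-\sigma/\xi)$ when $\xi<0$). The mean excess function $e_Y(u)=E[Y-u\mid Y>u]$ is finite and given by $$e_Y(u)=\begin{cases}\big(\bar F_Y(u)\big)^{-1}\,B\!\left(\left(1+\xi e^{u}/\sigma\right)^{-1};\,1/\xi,\,0\right), & \xi>0,\\[2pt] \big(\bar F_Y(u)\big)^{-1}\,B\!\left(1+\xi e^{u}/\sigma;\,1-1/\xi,\,0\right), & \xi<0,\\[2pt] \exp\!\left(e^{u}/\sigma\right)\,\Gamma\!\left(0,\,e^{u}/\sigma\right), & \xi=0,\end{cases}$$ where $\bar F_Y(u)=(1+\xi e^u/\sigma)^{-1/\xi}$ for $\xi\neq0$, $B(x;a,0)=\int_0^x t^{a-1}(1-t)^{-1}\,dt$ for $x\in(0,1)$, $a>0$, and $\Gamma(s,x)=\int_x^\infty t^{s-1}e^{-t}\,dt$. Consequently, the conditional tail expectation at level $p\in(0,1)$ is $E[Y\mid Y>y_p]=y_p+e_Y(y_p)$, where $y_p=\log\!\big(\frac{\sigma}{\xi}((1-p)^{-\xi}-1)\big)$ for $\xi\neq0$ is the $p$-quantile of $Y$.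
   Context: For $\sigma>0$ and $\xi\in\mathbb{R}$, the generalized Pareto distribution GPD$(\sigma,\xi)$ has distribution function $G(x)=1-(1+\xi x/\sigma)^{-1/\xi}$ for $\xi\neq 0$, with support $x\ge 0$ if $\xi>0$ and $0\le x\le -\sigma/\xi$ if $\xi<0$; for $\xi=0$ it is $G(x)=1-e^{-x/\sigma}$, $x\ge 0$. A random variable $Y$ has the exponentiated generalized Pareto distribution exGPD$(\sigma,\xi)$ if $Y=\log X$ with $X\sim$ GPD$(\sigma,\xi)$. Equivalently, for $\xi\neq0$ its distribution function is $F_Y(y)=1-(1+\xi e^y/\sigma)^{-1/\xi}$, with support $y\in\mathbb{R}$ if $\xi>0$ and $-\infty<y\le \log(-\sigma/\xi)$ if $\xi<0$. For $\xi=0$ it is $F_Y(y)=1-\exp(-e^{y}/\sigma)$, $y\in\mathbb{R}$. Its density is $f_Y(y)=\frac{e^y}{\sigma}(1+\xi e^y/\sigma)^{-1/\xi-1}$ on the support for $\xi\neq0$, and $f_Y(y)=\frac{1}{\sigma}e^{y-e^y/\sigma}$ for $\xi=0$. We write $\bar F_Y=1-F_Y$. *)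

theory Defs
  imports "HOL-Probability.Probability"
begin

definition exgpd_density :: "real \<Rightarrow> real \<Rightarrow> real \<Rightarrow> real" where
  "exgpd_density \<sigma> \<xi> y =
     (if \<xi> = 0 then exp (y - exp y / \<sigma>) / \<sigma>
      else if 0 < 1 + \<xi> * exp y / \<sigma>
           then exp y / \<sigma> * (1 + \<xi> * exp y / \<sigma>) powr (- 1 / \<xi> - 1)
           else 0)"

definition exgpd_cdf :: "real \<Rightarrow> real \<Rightarrow> real \<Rightarrow> real" where
  "exgpd_cdf \<sigma> \<xi> y =
     (if \<xi> = 0 then 1 - exp (- exp y / \<sigma>)
      else if 0 < 1 + \<xi> * exp y / \<sigma> then 1 - (1 + \<xi> * exp y / \<sigma>) powr (- 1 / \<xi>)
      else 1)"

definition exgpd_sf :: "real \<Rightarrow> real \<Rightarrow> real \<Rightarrow> real" where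
  "exgpd_sf \<sigma> \<xi> y = 1 - exgpd_cdf \<sigma> \<xi> y"

definition exgpd_quantile :: "real \<Rightarrow> real \<Rightarrow> real \<Rightarrow> real" where
  "exgpd_quantile \<sigma> \<xi> p =
     (if \<xi> = 0 then ln (- \<sigma> * ln (1 - p))
      else ln (\<sigma> / \<xi> * ((1 - p) powr (- \<xi>) - 1)))"

definition inc_beta0 :: "real \<Rightarrow> real \<Rightarrow> real" where
  "inc_beta0 x a = (LINT t:{0<..<x}|lborel. t powr (a - 1) / (1 - t))"

definition upper_gamma :: "real \<Rightarrow> real \<Rightarrow> real" where
  "upper_gamma s x = (LINT t:{x<..}|lborel. t powr (s - 1) * exp (- t))"

definition mean_excess :: "'a measure \<Rightarrow> ('a \<Rightarrow> real) \<Rightarrow> real \<Rightarrow> real" where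
  "mean_excess M Y u =
     (\<integral>\<omega>. (Y \<omega> - u) * indicator {u<..} (Y \<omega>) \<partial>M) / measure M {\<omega> \<in> space M. u < Y \<omega>}"

definition cond_tail_exp :: "'a measure \<Rightarrow> ('a \<Rightarrow> real) \<Rightarrow> real \<Rightarrow> real" where
  "cond_tail_exp M Y y =
     (\<integral>\<omega>. Y \<omega> * indicator {y<..} (Y \<omega>) \<partial>M) / measure M {\<omega> \<in> space M. y < Y \<omega>}"

end

theory Submission
  imports Defs
begin


lemma set_nn_eq:
  fixes f :: "real \<Rightarrow> real"
  assumes "set_integrable lborel A f" "\<And>x. x \<in> A \<Longrightarrow> 0 \<le> f x"
  shows "(\<integral>\<^sup>+x. ennreal (f x) * indicator A x \<partial>lborel) = ennreal (set_lebesgue_integral lborel A f)"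
proof -
  have "(\<integral>\<^sup>+x. ennreal (f x) * indicator A x \<partial>lborel) = (\<integral>\<^sup>+x. ennreal (indicator A x *\<^sub>R f x) \<partial>lborel)"
    by (intro nn_integral_cong) (auto simp: indicator_def)
  also have "\<dots> = ennreal (set_lebesgue_integral lborel A f)"
    unfolding set_lebesgue_integral_def
    using assms unfolding set_integrable_def
    by (intro nn_integral_eq_integral) (auto simp: indicator_def)
  finally show ?thesis .
qed

lemma dens_meas: "exgpd_density \<sigma> \<xi> \<in> borel_measurable borel"
  unfolding exgpd_density_def by measurable

lemma tail_pos:
  assumes "\<sigma> > 0" "\<xi> > 0"
  shows "(\<integral>\<^sup>+y. ennreal (exgpd_density \<sigma> \<xi> y) * indicator {s<..} y \<partial>lborel) = ennreal (exgpd_sf \<sigma> \<xi> s)"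
proof -
  have base: "0 < 1 + \<xi> * exp y / \<sigma>" for y using assms by (simp add: add_pos_nonneg)
  have dens: "exgpd_density \<sigma> \<xi> y = exp y / \<sigma> * (1 + \<xi> * exp y / \<sigma>) powr (-1/\<xi> - 1)" for y
    using assms base[of y] by (simp add: exgpd_density_def)
  have sf: "exgpd_sf \<sigma> \<xi> y = (1 + \<xi> * exp y / \<sigma>) powr (-1/\<xi>)" for y
    using assms base[of y] by (simp add: exgpd_sf_def exgpd_cdf_def)
  let ?F = "\<lambda>y. - ((1 + \<xi> * exp y / \<sigma>) powr (-1/\<xi>))"
  have D: "(?F has_real_derivative exgpd_density \<sigma> \<xi> y) (at y)" for y
    unfolding dens using base[of y] assms
    by (auto intro!: derivative_eq_intros simp: field_simps)
  have C: "isCont (exgpd_density \<sigma> \<xi>) y" for y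
    unfolding dens[abs_def] using base[of y] assms
    by (auto intro!: continuous_intros)
  have N: "0 \<le> exgpd_density \<sigma> \<xi> y" for y unfolding dens using assms by simp
  have L1: "((?F \<circ> real_of_ereal) \<longlongrightarrow> ?F s) (at_right (ereal s))"
    unfolding ereal_tendsto_simps using base[of s] assms
    by (intro tendsto_intros continuous_intros isCont_tendsto_compose[where g="\<lambda>y. - ((1 + \<xi> * exp y / \<sigma>) powr (-1/\<xi>))"] tendsto_ident_at) auto
  have L2: "((?F \<circ> real_of_ereal) \<longlongrightarrow> 0) (at_left \<infinity>)"
    unfolding ereal_tendsto_simps
  proof -
    have "filterlim (\<lambda>y. \<xi> / \<sigma> * exp y) at_top at_top"
      using assms by (intro filterlim_tendsto_pos_mult_at_top[OF tendsto_const] exp_at_top) auto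
    then have "filterlim (\<lambda>y. 1 + \<xi> * exp y / \<sigma>) at_top at_top"
      by (intro filterlim_tendsto_add_at_top[OF tendsto_const]) (simp add: field_simps)
    then have "((\<lambda>y. (1 + \<xi> * exp y / \<sigma>) powr (-1/\<xi>)) \<longlongrightarrow> 0) at_top"
      using assms by (intro tendsto_neg_powr) auto
    then show "(?F \<longlongrightarrow> 0) at_top" using tendsto_minus by fastforce
  qed
  have FT: "set_integrable lborel (einterval (ereal s) \<infinity>) (exgpd_density \<sigma> \<xi>)"
    "(LBINT y=ereal s..\<infinity>. exgpd_density \<sigma> \<xi> y) = 0 - ?F s"
    by (rule interval_integral_FTC_nonneg[OF _ D C _ L1 L2]; simp add: N)+
  show ?thesis using set_nn_eq[OF FT(1)] FT(2) N
    by (simp add: interval_lebesgue_integral_def sf)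
qed

lemma tail_zero:
  assumes "\<sigma> > 0" "\<xi> = 0"
  shows "(\<integral>\<^sup>+y. ennreal (exgpd_density \<sigma> \<xi> y) * indicator {s<..} y \<partial>lborel) = ennreal (exgpd_sf \<sigma> \<xi> s)"
proof -
  have dens: "exgpd_density \<sigma> \<xi> y = exp y * exp (- exp y / \<sigma>) / \<sigma>" for y
    using assms by (simp add: exgpd_density_def exp_add[symmetric])
  have sf: "exgpd_sf \<sigma> \<xi> y = exp (- exp y / \<sigma>)" for y
    using assms by (simp add: exgpd_sf_def exgpd_cdf_def)
  let ?F = "\<lambda>y. - exp (- exp y / \<sigma>)"
  have D: "(?F has_real_derivative exgpd_density \<sigma> \<xi> y) (at y)" for y
    unfolding dens using assms
    by (auto intro!: derivative_eq_intros simp: field_simps)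
  have C: "isCont (exgpd_density \<sigma> \<xi>) y" for y
    unfolding dens[abs_def] using assms
    by (auto intro!: continuous_intros)
  have N: "0 \<le> exgpd_density \<sigma> \<xi> y" for y unfolding dens using assms by simp
  have L1: "((?F \<circ> real_of_ereal) \<longlongrightarrow> ?F s) (at_right (ereal s))"
    unfolding ereal_tendsto_simps using assms
    by (intro tendsto_intros continuous_intros isCont_tendsto_compose[where g="?F"] tendsto_ident_at) auto
  have L2: "((?F \<circ> real_of_ereal) \<longlongrightarrow> 0) (at_left \<infinity>)"
    unfolding ereal_tendsto_simps
  proof -
    have "filterlim (\<lambda>y. inverse \<sigma> * exp y) at_top at_top"
      using assms by (intro filterlim_tendsto_pos_mult_at_top[OF tendsto_const] exp_at_top) auto
    then have "filterlim (\<lambda>y. - exp y / \<sigma>) at_bot at_top"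
      by (simp add: filterlim_uminus_at_bot field_simps)
    then have "((\<lambda>y. exp (- exp y / \<sigma>)) \<longlongrightarrow> 0) at_top"
      by (rule filterlim_compose[OF exp_at_bot])
    then show "(?F \<longlongrightarrow> 0) at_top" using tendsto_minus by fastforce
  qed
  have FT: "set_integrable lborel (einterval (ereal s) \<infinity>) (exgpd_density \<sigma> \<xi>)"
    "(LBINT y=ereal s..\<infinity>. exgpd_density \<sigma> \<xi> y) = 0 - ?F s"
    by (rule interval_integral_FTC_nonneg[OF _ D C _ L1 L2]; simp add: N)+
  show ?thesis using set_nn_eq[OF FT(1)] FT(2) N
    by (simp add: interval_lebesgue_integral_def sf)
qed

lemma tail_neg:
  assumes "\<sigma> > 0" "\<xi> < 0"
  shows "(\<integral>\<^sup>+y. ennreal (exgpd_density \<sigma> \<xi> y) * indicator {s<..} y \<partial>lborel) = ennreal (exgpd_sf \<sigma> \<xi> s)"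
proof -
  define m where "m = ln (- \<sigma> / \<xi>)"
  have em: "exp m = - \<sigma> / \<xi>" unfolding m_def using assms by (simp add: divide_pos_neg)
  have base_iff: "0 < 1 + \<xi> * exp y / \<sigma> \<longleftrightarrow> y < m" for y
  proof -
    have "0 < 1 + \<xi> * exp y / \<sigma> \<longleftrightarrow> exp y < exp m"
      unfolding em using assms by (auto simp: field_simps)
    then show ?thesis by simp
  qed
  have z: "exgpd_density \<sigma> \<xi> y = 0" if "\<not> y < m" for y
    using base_iff[of y] assms that by (simp add: exgpd_density_def)
  show ?thesis
  proof (cases "s < m")
    case False
    have "(\<integral>\<^sup>+y. ennreal (exgpd_density \<sigma> \<xi> y) * indicator {s<..} y \<partial>lborel) = (\<integral>\<^sup>+y. 0 \<partial>(lborel::real measure))"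
      by (intro nn_integral_cong) (use False in \<open>auto simp: indicator_def z\<close>)
    moreover have "exgpd_sf \<sigma> \<xi> s = 0"
      using False assms by (simp add: exgpd_sf_def exgpd_cdf_def base_iff)
    ultimately show ?thesis by simp
  next
    case True
    have dens: "s < y \<Longrightarrow> y < m \<Longrightarrow> exgpd_density \<sigma> \<xi> y = exp y / \<sigma> * (1 + \<xi> * exp y / \<sigma>) powr (-1/\<xi> - 1)" for y
      using assms base_iff[of y] by (simp add: exgpd_density_def)
    have sf: "exgpd_sf \<sigma> \<xi> s = (1 + \<xi> * exp s / \<sigma>) powr (-1/\<xi>)"
      using assms base_iff[of s] True by (simp add: exgpd_sf_def exgpd_cdf_def)
    let ?d = "\<lambda>y. exp y / \<sigma> * (1 + \<xi> * exp y / \<sigma>) powr (-1/\<xi> - 1)"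
    let ?F = "\<lambda>y. - ((1 + \<xi> * exp y / \<sigma>) powr (-1/\<xi>))"
    have D: "s < y \<Longrightarrow> y < m \<Longrightarrow> (?F has_real_derivative ?d y) (at y)" for y
      using base_iff[of y] assms
      by (auto intro!: derivative_eq_intros simp: field_simps)
    have C: "s < y \<Longrightarrow> y < m \<Longrightarrow> isCont ?d y" for y
      using base_iff[of y] assms
      by (auto intro!: continuous_intros)
    have N: "0 \<le> ?d y" for y using assms by simp
    have L1: "((?F \<circ> real_of_ereal) \<longlongrightarrow> ?F s) (at_right (ereal s))"
      unfolding ereal_tendsto_simps using base_iff[of s] True assms
      by (intro tendsto_intros continuous_intros isCont_tendsto_compose[where g="?F"] tendsto_ident_at) auto
    have L2: "((?F \<circ> real_of_ereal) \<longlongrightarrow> 0) (at_left (ereal m))"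
      unfolding ereal_tendsto_simps
    proof -
      have "((\<lambda>y. 1 + \<xi> * exp y / \<sigma>) \<longlongrightarrow> 1 + \<xi> * exp m / \<sigma>) (at_left m)"
        using assms by (intro tendsto_intros) linarith
      then have t0: "((\<lambda>y. 1 + \<xi> * exp y / \<sigma>) \<longlongrightarrow> 0) (at_left m)"
        using em assms by simp
      have ev: "\<forall>\<^sub>F y in at_left m. 0 \<le> 1 + \<xi> * exp y / \<sigma>"
        unfolding eventually_at_left_field
      proof (intro exI[of _ "m - 1"] conjI allI impI)
        fix y assume "m - 1 < y" "y < m"
        then show "0 \<le> 1 + \<xi> * exp y / \<sigma>" using base_iff[of y] by simp
      qed simp
      have "((\<lambda>y. (1 + \<xi> * exp y / \<sigma>) powr (-1/\<xi>)) \<longlongrightarrow> 0) (at_left m)"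
        using assms by (intro tendsto_zero_powrI[OF t0 tendsto_const ev]) (simp add: divide_neg_neg)
      then show "(?F \<longlongrightarrow> 0) (at_left m)" using tendsto_minus by fastforce
    qed
    have D': "ereal s < ereal y \<Longrightarrow> ereal y < ereal m \<Longrightarrow> (?F has_real_derivative ?d y) (at y)" for y
      using D by simp
    have C': "ereal s < ereal y \<Longrightarrow> ereal y < ereal m \<Longrightarrow> isCont ?d y" for y
      using C by simp
    have sm: "ereal s < ereal m" using True by simp
    have N': "AE x in lborel. ereal s < ereal x \<longrightarrow> ereal x < ereal m \<longrightarrow> 0 \<le> ?d x"
      using N by simp
    note FT = interval_integral_FTC_nonneg[OF sm D' C' N' L1 L2]
    have "(\<integral>\<^sup>+y. ennreal (exgpd_density \<sigma> \<xi> y) * indicator {s<..} y \<partial>lborel)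
        = (\<integral>\<^sup>+y. ennreal (?d y) * indicator {s<..<m} y \<partial>lborel)"
      by (intro nn_integral_cong) (use dens z in \<open>auto simp: indicator_def\<close>)
    also have "\<dots> = ennreal (exgpd_sf \<sigma> \<xi> s)"
      using set_nn_eq[OF FT(1)] FT(2) N True
      by (simp add: interval_lebesgue_integral_def sf)
    finally show ?thesis .
  qed
qed

lemma exc_zero:
  assumes "\<sigma> > 0" "\<xi> = 0"
  shows "(\<integral>\<^sup>+s. ennreal (exgpd_sf \<sigma> \<xi> s) * indicator {u<..} s \<partial>lborel) = ennreal (upper_gamma 0 (exp u / \<sigma>))"
proof -
  define c where "c = exp u / \<sigma>"
  have c: "c > 0" unfolding c_def using assms by simp
  let ?h = "\<lambda>t::real. t powr (0-1) * exp (-t)"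
  have E: "set_integrable lborel (einterval (ereal c) \<infinity>) (\<lambda>t. exp (-t))"
  proof (rule interval_integral_FTC_nonneg[where F="\<lambda>t. - exp (-t)" and A="- exp (-c)" and B=0])
    show "((\<lambda>t. - exp (-t)) has_real_derivative exp (-x)) (at x)" for x
      by (auto intro!: derivative_eq_intros)
    show "(((\<lambda>t. - exp (- t)) \<circ> real_of_ereal) \<longlongrightarrow> - exp (- c)) (at_right (ereal c))"
      unfolding ereal_tendsto_simps by (intro tendsto_intros)
    show "(((\<lambda>t. - exp (- t)) \<circ> real_of_ereal) \<longlongrightarrow> 0) (at_left \<infinity>)"
      unfolding ereal_tendsto_simps
      using tendsto_minus[OF filterlim_compose[OF exp_at_bot filterlim_uminus_at_bot_at_top]] by simp
  qed auto
  have H: "set_integrable lborel {c<..} ?h"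
  proof (rule set_integrable_bound[where f="\<lambda>t. exp (-t) / c"])
    show "set_integrable lborel {c<..} (\<lambda>t. exp (- t) / c)"
      using E by simp
    show "set_borel_measurable lborel {c<..} ?h"
      unfolding set_borel_measurable_def by measurable
    show "AE x in lborel. x \<in> {c<..} \<longrightarrow> norm (?h x) \<le> norm (exp (- x) / c)"
    proof (intro AE_I2 impI)
      fix x assume "x \<in> {c<..}"
      then have x: "x > c" by simp
      then have "x powr (0-1) = inverse x" using c by (simp add: powr_minus)
      moreover have "inverse x \<le> inverse c" using x c by (simp add: le_imp_inverse_le)
      ultimately show "norm (?h x) \<le> norm (exp (- x) / c)"
        using x c by (simp add: divide_inverse mult.commute mult_right_mono)
    qed
  qed
  let ?g = "\<lambda>t. ln (\<sigma> * t)"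
  let ?g' = "\<lambda>t::real. 1 / t"
  let ?f = "\<lambda>y. exp (- exp y / \<sigma>)"
  have fg: "?f (?g t) * ?g' t = ?h t" if "t > c" for t
    using that c assms by (simp add: powr_minus divide_inverse)
  have FG: "set_integrable lborel (einterval (ereal c) \<infinity>) (\<lambda>t. ?f (?g t) * ?g' t)"
    using H by (subst set_integrable_cong[OF refl _ fg]) auto
  have gc: "?g c = u" unfolding c_def using assms by simp
  have s1: "ereal c < \<infinity>" by simp
  have s2: "(?g has_real_derivative ?g' x) (at x)" if "ereal c < ereal x" "ereal x < \<infinity>" for x
    using that c assms by (auto intro!: derivative_eq_intros)
  have s3: "isCont ?f (?g x)" if "ereal c < ereal x" "ereal x < \<infinity>" for x using assms by (intro continuous_intros) auto
  have s4: "isCont ?g' x" if "ereal c < ereal x" "ereal x < \<infinity>" for x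
    using that c by (auto intro!: continuous_intros)
  have s5: "0 \<le> ?f (?g x)" if "ereal c < ereal x" "ereal x < \<infinity>" for x by simp
  have s6: "0 \<le> ?g' x" if "ereal c \<le> ereal x" "ereal x \<le> \<infinity>" for x using that c by simp
  have s7: "((ereal \<circ> ?g \<circ> real_of_ereal) \<longlongrightarrow> ereal u) (at_right (ereal c))"
    unfolding ereal_tendsto_simps1 ereal_tendsto_simps2 o_def
    using c assms gc by (auto intro!: tendsto_eq_intros)
  have s8: "((ereal \<circ> ?g \<circ> real_of_ereal) \<longlongrightarrow> \<infinity>) (at_left \<infinity>)"
  proof -
    have "filterlim ?g at_top at_top"
      using assms by (intro filterlim_compose[OF ln_at_top] filterlim_tendsto_pos_mult_at_top[OF tendsto_const _ filterlim_ident]) auto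
    then show ?thesis unfolding ereal_tendsto_simps1 ereal_tendsto_simps2 .
  qed
  note S = interval_integral_substitution_nonneg[OF s1 s2 s3 s4 s5 s6 s7 s8 FG]
  have "(LBINT t=ereal c..\<infinity>. ?f (?g t) * ?g' t) = upper_gamma 0 c"
    unfolding upper_gamma_def interval_lebesgue_integral_def einterval_eq_Ici
    by (simp only: if_P[OF ereal_less_eq(1)]) (rule set_lebesgue_integral_cong; use fg in auto)
  moreover have "(\<integral>\<^sup>+s. ennreal (exgpd_sf \<sigma> \<xi> s) * indicator {u<..} s \<partial>lborel) = ennreal (LBINT y=ereal u..\<infinity>. ?f y)"
    using set_nn_eq[of "{u<..}" ?f] S(1) assms
    by (simp add: interval_lebesgue_integral_def exgpd_sf_def exgpd_cdf_def)
  ultimately show ?thesis using S(2) c_def by simp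
qed

lemma nn_reflect:
  fixes F :: "real \<Rightarrow> ennreal"
  assumes "F \<in> borel_measurable borel"
  shows "(\<integral>\<^sup>+x. F x \<partial>lborel) = (\<integral>\<^sup>+x. F (- x) \<partial>lborel)"
  using nn_integral_real_affine[OF assms, of "-1" 0] by simp

lemma powr_int:
  fixes a T :: real
  assumes "a > 0" "T > 0"
  shows "set_integrable lborel {0<..<T} (\<lambda>t. t powr (a - 1))"
proof -
  have s1: "ereal 0 < ereal T" using assms by simp
  have s2: "((\<lambda>t. t powr a / a) has_real_derivative t powr (a - 1)) (at t)"
    if "ereal 0 < ereal t" "ereal t < ereal T" for t
    using that assms by (auto intro!: derivative_eq_intros)
  have s3: "isCont (\<lambda>t. t powr (a - 1)) t" if "ereal 0 < ereal t" "ereal t < ereal T" for t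
    using that by (auto intro!: continuous_intros)
  have s4: "AE t in lborel. ereal 0 < ereal t \<longrightarrow> ereal t < ereal T \<longrightarrow> 0 \<le> t powr (a - 1)"
    by simp
  have s5: "(((\<lambda>t. t powr a / a) \<circ> real_of_ereal) \<longlongrightarrow> 0) (at_right (ereal 0))"
    unfolding ereal_tendsto_simps1
  proof -
    have "((\<lambda>t. t powr a) \<longlongrightarrow> 0) (at_right (0::real))"
    proof (intro tendsto_zero_powrI tendsto_ident_at tendsto_const)
      show "\<forall>\<^sub>F x in at_right (0::real). 0 \<le> x"
        using eventually_at_right_less[of "0::real"] by (auto elim: eventually_mono)
    qed (use assms in auto)
    then show "((\<lambda>t. t powr a / a) \<longlongrightarrow> 0) (at_right 0)"
      using tendsto_divide_zero by blast
  qed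
  have s6: "(((\<lambda>t. t powr a / a) \<circ> real_of_ereal) \<longlongrightarrow> T powr a / a) (at_left (ereal T))"
    unfolding ereal_tendsto_simps1 using assms
    by (intro tendsto_intros tendsto_ident_at) auto
  show ?thesis using interval_integral_FTC_nonneg(1)[OF s1 s2 s3 s4 s5 s6] by simp
qed

lemma beta_int:
  fixes a T :: real
  assumes "a > 0" "T > 0" "T < 1"
  shows "set_integrable lborel {0<..<T} (\<lambda>t. t powr (a - 1) / (1 - t))"
proof (rule set_integrable_bound[where f="\<lambda>t. t powr (a - 1) / (1 - T)"])
  show "set_integrable lborel {0<..<T} (\<lambda>t. t powr (a - 1) / (1 - T))"
    by (rule set_integrable_divide) (rule powr_int[OF assms(1,2)])
  show "set_borel_measurable lborel {0<..<T} (\<lambda>t. t powr (a - 1) / (1 - t))"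
    unfolding set_borel_measurable_def by measurable
  show "AE x in lborel. x \<in> {0<..<T} \<longrightarrow> norm (x powr (a - 1) / (1 - x)) \<le> norm (x powr (a - 1) / (1 - T))"
  proof (intro AE_I2 impI)
    fix x assume "x \<in> {0<..<T}"
    then have x: "0 < x" "x < T" by auto
    then show "norm (x powr (a - 1) / (1 - x)) \<le> norm (x powr (a - 1) / (1 - T))"
      using assms by (auto intro!: divide_left_mono mult_pos_pos)
  qed
qed

lemma exc_pos:
  assumes "\<sigma> > 0" "\<xi> > 0"
  shows "(\<integral>\<^sup>+s. ennreal (exgpd_sf \<sigma> \<xi> s) * indicator {u<..} s \<partial>lborel)
    = ennreal (inc_beta0 (inverse (1 + \<xi> * exp u / \<sigma>)) (1 / \<xi>))"
proof -
  define T where "T = inverse (1 + \<xi> * exp u / \<sigma>)"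
  have cpos: "0 < \<xi> * exp u / \<sigma>" using assms by simp
  have T0: "0 < T" and T1: "T < 1" unfolding T_def using cpos by (auto simp: inverse_less_1_iff)
  let ?h = "\<lambda>t::real. t powr (1 / \<xi> - 1) / (1 - t)"
  let ?g = "\<lambda>t::real. (ln (\<xi> / \<sigma>) - ln (1 - t)) + ln t"
  let ?g' = "\<lambda>t::real. 1 / t + 1 / (1 - t)"
  let ?f = "\<lambda>z. (1 + \<xi> * exp (- z) / \<sigma>) powr (- 1 / \<xi>)"
  have expg: "exp (?g t) = \<xi> / \<sigma> * t / (1 - t)" if "0 < t" "t < 1" for t
    using that assms by (simp add: exp_add exp_diff)
  have fg: "?f (?g t) * ?g' t = ?h t" if "0 < t" "t < 1" for t
  proof -
    have "exp (- ?g t) = inverse (exp (?g t))" by (rule exp_minus)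
    also have "\<dots> = \<sigma> / \<xi> * (1 - t) / t"
      unfolding expg[OF that] using that assms by (simp add: field_simps)
    finally have "exp (- ?g t) = \<sigma> / \<xi> * (1 - t) / t" .
    then have b: "1 + \<xi> * exp (- ?g t) / \<sigma> = inverse t"
      using that assms by (simp add: field_simps)
    have "?f (?g t) = t powr (1 / \<xi>)"
      unfolding b using that by (simp add: powr_def ln_inverse)
    moreover have "?g' t = inverse t / (1 - t)" using that by (simp add: field_simps)
    moreover have "t powr (1 / \<xi> - 1) = t powr (1 / \<xi>) * inverse t"
      using that by (simp add: powr_diff divide_inverse)
    ultimately show ?thesis by simp
  qed
  have gT: "?g T = - u"
  proof -
    have q: "inverse (1 + c) / (1 - inverse (1 + c)) = 1 / c" if "c > 0" for c :: real
      using that by (simp add: field_simps)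
    have "exp (?g T) = \<xi> / \<sigma> * (T / (1 - T))"
      unfolding expg[OF T0 T1] by simp
    also have "\<dots> = \<xi> / \<sigma> / (\<xi> * exp u / \<sigma>)"
      unfolding T_def q[OF cpos] by simp
    also have "\<dots> = exp (- u)" using assms by (simp add: exp_minus field_simps)
    finally have "exp (?g T) = exp (- u)" .
    then show ?thesis by simp
  qed
  have FG: "set_integrable lborel (einterval (ereal 0) (ereal T)) (\<lambda>t. ?f (?g t) * ?g' t)"
    using beta_int[of "1/\<xi>" T] assms T0 T1
    by (subst set_integrable_cong[OF refl _ fg]) auto
  have s1: "ereal 0 < ereal T" using T0 by simp
  have s2: "(?g has_real_derivative ?g' x) (at x)" if "ereal 0 < ereal x" "ereal x < ereal T" for x
    using that T1 assms by (auto intro!: derivative_eq_intros simp: field_simps)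
  have s3: "isCont ?f (?g x)" if "ereal 0 < ereal x" "ereal x < ereal T" for x
  proof -
    have "1 + \<xi> * exp z / \<sigma> \<noteq> 0" for z
      using assms by (simp add: add_pos_nonneg less_imp_neq[symmetric])
    then show ?thesis using assms by (intro continuous_intros) auto
  qed
  have s4: "isCont ?g' x" if "ereal 0 < ereal x" "ereal x < ereal T" for x
    using that T1 by (auto intro!: continuous_intros)
  have s5: "0 \<le> ?f (?g x)" if "ereal 0 < ereal x" "ereal x < ereal T" for x by simp
  have s6: "0 \<le> ?g' x" if "ereal 0 \<le> ereal x" "ereal x \<le> ereal T" for x using that T1 by simp
  have s7: "((ereal \<circ> ?g \<circ> real_of_ereal) \<longlongrightarrow> - \<infinity>) (at_right (ereal 0))"
  proof -
    have "((\<lambda>t. ln (\<xi> / \<sigma>) - ln (1 - t)) \<longlongrightarrow> ln (\<xi> / \<sigma>) - ln (1 - 0)) (at_right 0)"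
      by (intro tendsto_intros) auto
    then have "filterlim ?g at_bot (at_right 0)"
      by (subst filterlim_tendsto_add_at_bot_iff) (auto intro: ln_at_0)
    then show ?thesis unfolding ereal_tendsto_simps1 ereal_tendsto_simps2 .
  qed
  have s8: "((ereal \<circ> ?g \<circ> real_of_ereal) \<longlongrightarrow> ereal (- u)) (at_left (ereal T))"
    unfolding ereal_tendsto_simps1 ereal_tendsto_simps2
    unfolding gT[symmetric] using T0 T1 by (intro tendsto_intros) auto
  note S = interval_integral_substitution_nonneg[OF s1 s2 s3 s4 s5 s6 s7 s8 FG]
  have I: "(LBINT t=ereal 0..ereal T. ?f (?g t) * ?g' t) = inc_beta0 T (1 / \<xi>)"
    unfolding inc_beta0_def interval_lebesgue_integral_def einterval_eq_Icc
    using T0 by (simp only: if_P[OF less_imp_le[OF s1]]) (rule set_lebesgue_integral_cong; use fg T1 in auto)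
  have sf: "exgpd_sf \<sigma> \<xi> s = ?f (- s)" for s
    using assms by (simp add: exgpd_sf_def exgpd_cdf_def add_pos_nonneg)
  have "(\<integral>\<^sup>+s. ennreal (exgpd_sf \<sigma> \<xi> s) * indicator {u<..} s \<partial>lborel)
      = (\<integral>\<^sup>+s. ennreal (exgpd_sf \<sigma> \<xi> (- s)) * indicator {u<..} (- s) \<partial>lborel)"
    by (rule nn_reflect) (simp add: exgpd_sf_def exgpd_cdf_def)
  also have "\<dots> = (\<integral>\<^sup>+s. ennreal (?f s) * indicator {..<- u} s \<partial>lborel)"
    unfolding sf by (intro nn_integral_cong) (auto simp: indicator_def)
  also have "\<dots> = ennreal (LBINT y=- \<infinity>..ereal (- u). ?f y)"
    using set_nn_eq[of "{..<- u}" ?f] S(1)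
    by (simp add: interval_lebesgue_integral_def)
  finally show ?thesis using S(2) I T_def by simp
qed



lemma neg_base:
  fixes \<sigma> \<xi> y :: real
  assumes "\<sigma> > 0" "\<xi> < 0"
  shows "0 < 1 + \<xi> * exp y / \<sigma> \<longleftrightarrow> y < ln (- \<sigma> / \<xi>)"
proof -
  have "\<sigma> / \<xi> < 0" by (rule divide_pos_neg) (use assms in auto)
  then have "0 < - \<sigma> / \<xi>" by simp
  then have em: "exp (ln (- \<sigma> / \<xi>)) = - \<sigma> / \<xi>" by simp
  have "0 < 1 + \<xi> * exp y / \<sigma> \<longleftrightarrow> exp y < exp (ln (- \<sigma> / \<xi>))"
    unfolding em using assms by (auto simp: field_simps)
  then show ?thesis by simp
qed

lemma exc_neg:
  assumes "\<sigma> > 0" "\<xi> < 0" "u < ln (- \<sigma> / \<xi>)"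
  shows "(\<integral>\<^sup>+s. ennreal (exgpd_sf \<sigma> \<xi> s) * indicator {u<..} s \<partial>lborel)
    = ennreal (inc_beta0 (1 + \<xi> * exp u / \<sigma>) (1 - 1 / \<xi>))"
proof -
  define m where "m = ln (- \<sigma> / \<xi>)"
  define T where "T = 1 + \<xi> * exp u / \<sigma>"
  have T0: "0 < T" unfolding T_def using neg_base[OF assms(1,2)] assms(3) by simp
  have T1: "T < 1"
  proof -
    have "\<xi> * exp u < 0" using assms by (simp add: mult_neg_pos)
    then have "\<xi> * exp u / \<sigma> < 0" using assms by (simp add: divide_neg_pos)
    then show ?thesis unfolding T_def by simp
  qed
  let ?h = "\<lambda>t::real. t powr ((1 - 1 / \<xi>) - 1) / (1 - t)"
  let ?g = "\<lambda>t::real. - m - ln (1 - t)"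
  let ?g' = "\<lambda>t::real. 1 / (1 - t)"
  let ?f = "\<lambda>z. (1 + \<xi> * exp (- z) / \<sigma>) powr (- 1 / \<xi>)"
  have em: "exp m = - \<sigma> / \<xi>" unfolding m_def using assms by (simp add: divide_pos_neg)
  have b: "1 + \<xi> * exp (- ?g t) / \<sigma> = t" if "t < 1" for t
  proof -
    have "exp (- ?g t) = exp m * (1 - t)" using that by (simp add: exp_add)
    then show ?thesis unfolding em using assms by (simp add: field_simps)
  qed
  have fg: "?f (?g t) * ?g' t = ?h t" if "0 < t" "t < 1" for t
    unfolding b[OF that(2)] by simp
  have g0: "?g 0 = - m" by simp
  have gT: "?g T = - u"
  proof -
    have "exp (- ?g T) = exp u"
    proof -
      have "exp (- ?g T) = exp m * (1 - T)" using T1 by (simp add: exp_add)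
      then show ?thesis unfolding em T_def using assms by (simp add: field_simps)
    qed
    then show ?thesis by simp
  qed
  have FG: "set_integrable lborel (einterval (ereal 0) (ereal T)) (\<lambda>t. ?f (?g t) * ?g' t)"
  proof -
    have "1 / \<xi> < 0" using assms by simp
    then have a0: "0 < 1 - 1 / \<xi>" by simp
    show ?thesis using beta_int[OF a0 T0 T1]
      by (subst set_integrable_cong[OF refl _ fg]) (use T1 in auto)
  qed
  have s1: "ereal 0 < ereal T" using T0 by simp
  have s2: "(?g has_real_derivative ?g' x) (at x)" if "ereal 0 < ereal x" "ereal x < ereal T" for x
    using that T1 assms by (auto intro!: derivative_eq_intros simp: field_simps)
  have s3: "isCont ?f (?g x)" if "ereal 0 < ereal x" "ereal x < ereal T" for x
  proof -
    have "1 + \<xi> * exp (- ?g x) / \<sigma> \<noteq> 0" using b[of x] that T1 by simp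
    then show ?thesis using assms by (intro continuous_intros) auto
  qed
  have s4: "isCont ?g' x" if "ereal 0 < ereal x" "ereal x < ereal T" for x
    using that T1 by (auto intro!: continuous_intros)
  have s5: "0 \<le> ?f (?g x)" if "ereal 0 < ereal x" "ereal x < ereal T" for x by simp
  have s6: "0 \<le> ?g' x" if "ereal 0 \<le> ereal x" "ereal x \<le> ereal T" for x using that T1 by simp
  have s7: "((ereal \<circ> ?g \<circ> real_of_ereal) \<longlongrightarrow> ereal (- m)) (at_right (ereal 0))"
    unfolding ereal_tendsto_simps1 ereal_tendsto_simps2
  proof -
    have "(?g \<longlongrightarrow> ?g 0) (at_right 0)" by (intro tendsto_intros) auto
    then show "(?g \<longlongrightarrow> - m) (at_right 0)" by simp
  qed
  have s8: "((ereal \<circ> ?g \<circ> real_of_ereal) \<longlongrightarrow> ereal (- u)) (at_left (ereal T))"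
    unfolding ereal_tendsto_simps1 ereal_tendsto_simps2
  proof -
    have "(?g \<longlongrightarrow> ?g T) (at_left T)" using T1 by (intro tendsto_intros) auto
    then show "(?g \<longlongrightarrow> - u) (at_left T)" unfolding gT .
  qed
  note S = interval_integral_substitution_nonneg[OF s1 s2 s3 s4 s5 s6 s7 s8 FG]
  have I: "(LBINT t=ereal 0..ereal T. ?f (?g t) * ?g' t) = inc_beta0 T (1 - 1 / \<xi>)"
    unfolding inc_beta0_def interval_lebesgue_integral_def einterval_eq_Icc
    using T0 by (simp only: if_P[OF less_imp_le[OF s1]]) (rule set_lebesgue_integral_cong; use fg T1 in auto)
  have sfv: "exgpd_sf \<sigma> \<xi> y = (if y < m then (1 + \<xi> * exp y / \<sigma>) powr (-1/\<xi>) else 0)" for y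
    using neg_base[OF assms(1,2), of y] assms unfolding m_def by (simp add: exgpd_sf_def exgpd_cdf_def)
  have sf: "ennreal (exgpd_sf \<sigma> \<xi> (- s)) * indicator {u<..} (- s) = ennreal (?f s) * indicator {- m<..<- u} s" for s
    unfolding sfv by (simp add: indicator_def)
  have "(\<integral>\<^sup>+s. ennreal (exgpd_sf \<sigma> \<xi> s) * indicator {u<..} s \<partial>lborel)
      = (\<integral>\<^sup>+s. ennreal (exgpd_sf \<sigma> \<xi> (- s)) * indicator {u<..} (- s) \<partial>lborel)"
    by (rule nn_reflect) (simp add: exgpd_sf_def exgpd_cdf_def)
  also have "\<dots> = (\<integral>\<^sup>+s. ennreal (?f s) * indicator {- m<..<- u} s \<partial>lborel)"
    by (rule nn_integral_cong) (rule sf)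
  also have "\<dots> = ennreal (LBINT y=ereal (- m)..ereal (- u). ?f y)"
    using set_nn_eq[of "{- m<..<- u}" ?f] S(1) assms m_def
    by (simp add: interval_lebesgue_integral_def)
  finally show ?thesis using S(2) I T_def by simp
qed



lemma tonelli:
  fixes f S :: "real \<Rightarrow> real"
  assumes fm[measurable]: "f \<in> borel_measurable borel"
    and tail: "\<And>s. (\<integral>\<^sup>+y. ennreal (f y) * indicator {s<..} y \<partial>lborel) = ennreal (S s)"
  shows "(\<integral>\<^sup>+y. ennreal (f y) * ennreal ((y - u) * indicator {u<..} y) \<partial>lborel)
       = (\<integral>\<^sup>+s. ennreal (S s) * indicator {u<..} s \<partial>lborel)"
proof -
  have inner: "ennreal ((y - u) * indicator {u<..} y) = (\<integral>\<^sup>+s. indicator {u<..<y} s \<partial>lborel)" for y :: real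
  proof (cases "u < y")
    case True then show ?thesis by simp
  next
    case False then have "{u<..<y} = {}" by auto
    then show ?thesis using False by simp
  qed
  have "(\<integral>\<^sup>+y. ennreal (f y) * ennreal ((y - u) * indicator {u<..} y) \<partial>lborel)
      = (\<integral>\<^sup>+y. (\<integral>\<^sup>+s. ennreal (f y) * indicator {u<..<y} s \<partial>lborel) \<partial>lborel)"
    unfolding inner by (simp add: nn_integral_cmult)
  also have "\<dots> = (\<integral>\<^sup>+s. (\<integral>\<^sup>+y. ennreal (f y) * indicator {u<..<y} s \<partial>lborel) \<partial>lborel)"
  proof (rule lborel_pair.Fubini')
    have e: "case_prod (\<lambda>s y. ennreal (f y) * indicator {u<..<y} s) = (\<lambda>p. ennreal (f (snd p)) * (if u < fst p \<and> fst p < snd p then 1 else 0))"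
      by (auto simp: indicator_def fun_eq_iff)
    show "case_prod (\<lambda>s y. ennreal (f y) * indicator {u<..<y} s) \<in> borel_measurable (lborel \<Otimes>\<^sub>M lborel)"
      unfolding e by measurable
  qed
  also have "\<dots> = (\<integral>\<^sup>+s. ennreal (S s) * indicator {u<..} s \<partial>lborel)"
  proof (rule nn_integral_cong)
    fix s :: real
    have "(\<integral>\<^sup>+y. ennreal (f y) * indicator {u<..<y} s \<partial>lborel)
        = (\<integral>\<^sup>+y. indicator {u<..} s * (ennreal (f y) * indicator {s<..} y) \<partial>lborel)"
      by (intro nn_integral_cong) (auto simp: indicator_def)
    also have "\<dots> = indicator {u<..} s * ennreal (S s)"
      by (subst nn_integral_cmult) (auto simp: tail)
    finally show "(\<integral>\<^sup>+y. ennreal (f y) * indicator {u<..<y} s \<partial>lborel) = ennreal (S s) * indicator {u<..} s"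
      by (simp add: mult.commute)
  qed
  finally show ?thesis .
qed



lemma tail_all:
  assumes "\<sigma> > 0"
  shows "(\<integral>\<^sup>+y. ennreal (exgpd_density \<sigma> \<xi> y) * indicator {s<..} y \<partial>lborel) = ennreal (exgpd_sf \<sigma> \<xi> s)"
  using tail_pos[OF assms] tail_zero[OF assms] tail_neg[OF assms] by (cases "\<xi>" "0::real" rule: linorder_cases) auto

definition Rf :: "real \<Rightarrow> real \<Rightarrow> real \<Rightarrow> real" where
  "Rf \<sigma> \<xi> u = (if \<xi> > 0 then inc_beta0 (inverse (1 + \<xi> * exp u / \<sigma>)) (1 / \<xi>)
         else if \<xi> < 0 then inc_beta0 (1 + \<xi> * exp u / \<sigma>) (1 - 1 / \<xi>)
         else upper_gamma 0 (exp u / \<sigma>))"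

lemma exc_all:
  assumes "\<sigma> > 0" "\<xi> < 0 \<Longrightarrow> u < ln (- \<sigma> / \<xi>)"
  shows "(\<integral>\<^sup>+s. ennreal (exgpd_sf \<sigma> \<xi> s) * indicator {u<..} s \<partial>lborel) = ennreal (Rf \<sigma> \<xi> u)"
  using exc_pos[OF assms(1)] exc_zero[OF assms(1)] exc_neg[OF assms(1) _ assms(2)]
  unfolding Rf_def by (cases "\<xi>" "0::real" rule: linorder_cases) auto

lemma inc_beta0_nonneg: "0 < x \<Longrightarrow> x < 1 \<Longrightarrow> 0 \<le> inc_beta0 x a"
  unfolding inc_beta0_def set_lebesgue_integral_def
  by (intro Bochner_Integration.integral_nonneg) (auto simp: indicator_def)

lemma upper_gamma_nonneg: "0 \<le> upper_gamma s x"
  unfolding upper_gamma_def set_lebesgue_integral_def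
  by (intro Bochner_Integration.integral_nonneg) (auto simp: indicator_def)

lemma Rf_nonneg:
  assumes "\<sigma> > 0" "\<xi> < 0 \<Longrightarrow> u < ln (- \<sigma> / \<xi>)"
  shows "0 \<le> Rf \<sigma> \<xi> u"
proof (cases "\<xi>" "0::real" rule: linorder_cases)
  case less
  have "0 < 1 + \<xi> * exp u / \<sigma>" using neg_base[OF assms(1) less] assms(2)[OF less] by simp
  moreover have "\<xi> * exp u / \<sigma> < 0" using less assms(1) by (simp add: mult_neg_pos divide_neg_pos)
  ultimately show ?thesis using less unfolding Rf_def by (simp add: inc_beta0_nonneg)
next
  case equal then show ?thesis unfolding Rf_def by (simp add: upper_gamma_nonneg)
next
  case greater
  then have c: "0 < \<xi> * exp u / \<sigma>" using assms by simp
  then have "0 < inverse (1 + \<xi> * exp u / \<sigma>)" "inverse (1 + \<xi> * exp u / \<sigma>) < 1"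
    by (auto simp: inverse_less_1_iff)
  then show ?thesis using greater unfolding Rf_def by (simp add: inc_beta0_nonneg)
qed

lemma sf_nonneg: "0 \<le> exgpd_sf \<sigma> \<xi> y"
  by (simp add: exgpd_sf_def exgpd_cdf_def)

lemma sf_pos:
  assumes "\<sigma> > 0" "\<xi> < 0 \<Longrightarrow> u < ln (- \<sigma> / \<xi>)"
  shows "0 < exgpd_sf \<sigma> \<xi> u"
proof (cases "\<xi>" "0::real" rule: linorder_cases)
  case less
  have "0 < 1 + \<xi> * exp u / \<sigma>" using neg_base[OF assms(1) less] assms(2)[OF less] by simp
  then show ?thesis using less by (simp add: exgpd_sf_def exgpd_cdf_def)
next
  case equal then show ?thesis by (simp add: exgpd_sf_def exgpd_cdf_def)
next
  case greater
  then have "0 < 1 + \<xi> * exp u / \<sigma>" using assms by (simp add: add_pos_pos)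
  then show ?thesis using greater by (simp add: exgpd_sf_def exgpd_cdf_def)
qed

lemma dist_int:
  fixes g :: "real \<Rightarrow> real" and fd :: "real \<Rightarrow> real"
  assumes D: "distributed M lborel Y (\<lambda>y. ennreal (fd y))"
    and gm: "g \<in> borel_measurable borel" and g0: "\<And>y. 0 \<le> g y" and r0: "0 \<le> r"
    and I: "(\<integral>\<^sup>+y. ennreal (fd y) * ennreal (g y) \<partial>lborel) = ennreal r"
  shows "integrable M (\<lambda>\<omega>. g (Y \<omega>)) \<and> (\<integral>\<omega>. g (Y \<omega>) \<partial>M) = r"
proof -
  have Ym: "Y \<in> borel_measurable M" using distributed_measurable[OF D] by simp
  have "(\<integral>\<^sup>+\<omega>. ennreal (g (Y \<omega>)) \<partial>M) = ennreal r"
    using distributed_nn_integral[OF D, of "\<lambda>y. ennreal (g y)"] gm I by simp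
  then show ?thesis
    using Ym gm g0 r0 by (subst nn_integral_eq_integrable[symmetric]) auto
qed




lemma quant:
  assumes "\<sigma> > 0" "0 < p" "p < 1"
  shows "exgpd_cdf \<sigma> \<xi> (exgpd_quantile \<sigma> \<xi> p) = p \<and> (\<xi> < 0 \<longrightarrow> exgpd_quantile \<sigma> \<xi> p < ln (- \<sigma> / \<xi>))"
proof (cases "\<xi> = 0")
  case True
  have l: "ln (1 - p) < 0" using assms by simp
  then have pos: "0 < - \<sigma> * ln (1 - p)" using assms by (simp add: mult_pos_neg)
  have "exp (exgpd_quantile \<sigma> \<xi> p) = - \<sigma> * ln (1 - p)"
    using True pos by (simp add: exgpd_quantile_def)
  then have "exp (- exp (exgpd_quantile \<sigma> \<xi> p) / \<sigma>) = 1 - p"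
    using assms by simp
  then show ?thesis using True by (simp add: exgpd_cdf_def)
next
  case False
  define v where "v = (1 - p) powr (- \<xi>)"
  have v: "v = exp (- \<xi> * ln (1 - p))" unfolding v_def powr_def using assms by simp
  have l: "ln (1 - p) < 0" using assms by simp
  have vpos: "0 < v" unfolding v by simp
  have arg: "0 < \<sigma> / \<xi> * (v - 1)"
  proof (cases "\<xi> > 0")
    case True
    then have "0 < - \<xi> * ln (1 - p)" using l by (simp add: mult_pos_neg)
    then have "1 < v" unfolding v by simp
    then show ?thesis using True assms by simp
  next
    case f: False
    then have n: "\<xi> < 0" using False by simp
    then have "- \<xi> * ln (1 - p) < 0" using l by (simp add: mult_neg_neg)
    then have "v < 1" unfolding v by simp
    moreover have "\<sigma> / \<xi> < 0" using n assms by (simp add: divide_pos_neg)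
    ultimately show ?thesis using mult_neg_neg[of "\<sigma> / \<xi>" "v - 1"] by simp
  qed
  have q: "exp (exgpd_quantile \<sigma> \<xi> p) = \<sigma> / \<xi> * (v - 1)"
    using False arg by (simp add: exgpd_quantile_def v_def)
  have b: "1 + \<xi> * exp (exgpd_quantile \<sigma> \<xi> p) / \<sigma> = v"
    unfolding q using False assms by (simp add: field_simps)
  have "v powr (- 1 / \<xi>) = 1 - p"
    unfolding v_def using assms False by (simp add: powr_powr)
  then have c: "exgpd_cdf \<sigma> \<xi> (exgpd_quantile \<sigma> \<xi> p) = p"
    using False vpos b by (simp add: exgpd_cdf_def)
  have "\<xi> < 0 \<longrightarrow> exgpd_quantile \<sigma> \<xi> p < ln (- \<sigma> / \<xi>)"
    using neg_base[OF assms(1), of \<xi> "exgpd_quantile \<sigma> \<xi> p"] b vpos by auto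
  with c show ?thesis by blast
qed

theorem mainTheorem15:
  fixes M :: "'a measure" and Y :: "'a \<Rightarrow> real" and \<sigma> \<xi> u :: real
  assumes "prob_space M"
    and "distributed M lborel Y (\<lambda>y. ennreal (exgpd_density \<sigma> \<xi> y))"
    and "\<sigma> > 0"
    and "\<xi> < 0 \<Longrightarrow> u < ln (- \<sigma> / \<xi>)"
  shows "integrable M (\<lambda>\<omega>. (Y \<omega> - u) * indicator {u<..} (Y \<omega>))
    \<and> measure M {\<omega> \<in> space M. u < Y \<omega>} > 0
    \<and> mean_excess M Y u =
        (if \<xi> > 0 then inverse (exgpd_sf \<sigma> \<xi> u) * inc_beta0 (inverse (1 + \<xi> * exp u / \<sigma>)) (1 / \<xi>)
         else if \<xi> < 0 then inverse (exgpd_sf \<sigma> \<xi> u) * inc_beta0 (1 + \<xi> * exp u / \<sigma>) (1 - 1 / \<xi>)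
         else exp (exp u / \<sigma>) * upper_gamma 0 (exp u / \<sigma>))
    \<and> (\<forall>p. 0 < p \<and> p < 1 \<longrightarrow>
          exgpd_cdf \<sigma> \<xi> (exgpd_quantile \<sigma> \<xi> p) = p
        \<and> integrable M (\<lambda>\<omega>. Y \<omega> * indicator {exgpd_quantile \<sigma> \<xi> p<..} (Y \<omega>))
        \<and> cond_tail_exp M Y (exgpd_quantile \<sigma> \<xi> p)
            = exgpd_quantile \<sigma> \<xi> p + mean_excess M Y (exgpd_quantile \<sigma> \<xi> p))"
proof -
  note D = assms(2)
  have sp: "\<sigma> > 0" by fact
  have fdm: "exgpd_density \<sigma> \<xi> \<in> borel_measurable borel" by (rule dens_meas)
  have Ym: "Y \<in> borel_measurable M" using distributed_measurable[OF D] by simp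
  have core: "integrable M (\<lambda>\<omega>. (Y \<omega> - v) * indicator {v<..} (Y \<omega>))
      \<and> (\<integral>\<omega>. (Y \<omega> - v) * indicator {v<..} (Y \<omega>) \<partial>M) = Rf \<sigma> \<xi> v
      \<and> measure M {\<omega> \<in> space M. v < Y \<omega>} = exgpd_sf \<sigma> \<xi> v
      \<and> integrable M (\<lambda>\<omega>. indicator {v<..} (Y \<omega>) :: real)
      \<and> (\<integral>\<omega>. indicator {v<..} (Y \<omega>) \<partial>M) = exgpd_sf \<sigma> \<xi> v"
    if hv: "\<xi> < 0 \<Longrightarrow> v < ln (- \<sigma> / \<xi>)" for v
  proof -
    have A: "integrable M (\<lambda>\<omega>. (Y \<omega> - v) * indicator {v<..} (Y \<omega>))
      \<and> (\<integral>\<omega>. (Y \<omega> - v) * indicator {v<..} (Y \<omega>) \<partial>M) = Rf \<sigma> \<xi> v"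
    proof (rule dist_int[OF D])
      show "(\<lambda>y. (y - v) * indicator {v<..} y) \<in> borel_measurable borel" by measurable
      show "0 \<le> (y - v) * indicator {v<..} y" for y :: real by (simp add: indicator_def)
      show "0 \<le> Rf \<sigma> \<xi> v" by (rule Rf_nonneg[OF sp hv])
      show "(\<integral>\<^sup>+y. ennreal (exgpd_density \<sigma> \<xi> y) * ennreal ((y - v) * indicator {v<..} y) \<partial>lborel) = ennreal (Rf \<sigma> \<xi> v)"
        using tonelli[OF fdm tail_all[OF sp]] exc_all[OF sp hv] by simp
    qed
    have B: "integrable M (\<lambda>\<omega>. indicator {v<..} (Y \<omega>) :: real)
      \<and> (\<integral>\<omega>. indicator {v<..} (Y \<omega>) \<partial>M) = exgpd_sf \<sigma> \<xi> v"
    proof (rule dist_int[OF D])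
      show "(indicator {v<..} :: real \<Rightarrow> real) \<in> borel_measurable borel" by measurable
      show "0 \<le> (indicator {v<..} y :: real)" for y :: real by (simp add: indicator_def)
      show "0 \<le> exgpd_sf \<sigma> \<xi> v" by (rule sf_nonneg)
      show "(\<integral>\<^sup>+y. ennreal (exgpd_density \<sigma> \<xi> y) * ennreal (indicator {v<..} y) \<partial>lborel) = ennreal (exgpd_sf \<sigma> \<xi> v)"
        using tail_all[OF sp, of \<xi> v] by (simp add: ennreal_indicator)
    qed
    have "emeasure M (Y -` {v<..} \<inter> space M) = ennreal (exgpd_sf \<sigma> \<xi> v)"
      using distributed_emeasure[OF D, of "{v<..}"] tail_all[OF sp] by simp
    moreover have "Y -` {v<..} \<inter> space M = {\<omega> \<in> space M. v < Y \<omega>}" by auto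
    ultimately have "measure M {\<omega> \<in> space M. v < Y \<omega>} = exgpd_sf \<sigma> \<xi> v"
      using sf_nonneg by (simp add: measure_def)
    with A B show ?thesis by blast
  qed
  have me: "mean_excess M Y v = Rf \<sigma> \<xi> v / exgpd_sf \<sigma> \<xi> v"
    if hv: "\<xi> < 0 \<Longrightarrow> v < ln (- \<sigma> / \<xi>)" for v
    using core[OF hv] unfolding mean_excess_def by simp
  have P1: "integrable M (\<lambda>\<omega>. (Y \<omega> - u) * indicator {u<..} (Y \<omega>))"
    using core[OF assms(4)] by blast
  have P2: "measure M {\<omega> \<in> space M. u < Y \<omega>} > 0"
    using core[OF assms(4)] sf_pos[OF sp assms(4)] by simp
  have P3: "mean_excess M Y u =
        (if \<xi> > 0 then inverse (exgpd_sf \<sigma> \<xi> u) * inc_beta0 (inverse (1 + \<xi> * exp u / \<sigma>)) (1 / \<xi>)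
         else if \<xi> < 0 then inverse (exgpd_sf \<sigma> \<xi> u) * inc_beta0 (1 + \<xi> * exp u / \<sigma>) (1 - 1 / \<xi>)
         else exp (exp u / \<sigma>) * upper_gamma 0 (exp u / \<sigma>))"
  proof -
    have m: "mean_excess M Y u = Rf \<sigma> \<xi> u / exgpd_sf \<sigma> \<xi> u" by (rule me[OF assms(4)])
    show ?thesis
    proof (cases "\<xi> = 0")
      case True
      then have "exgpd_sf \<sigma> \<xi> u = inverse (exp (exp u / \<sigma>))"
        by (simp add: exgpd_sf_def exgpd_cdf_def exp_minus)
      then show ?thesis using True unfolding m Rf_def by (simp add: divide_inverse)
    next
      case False
      then show ?thesis unfolding m Rf_def by (simp add: divide_inverse mult.commute)
    qed
  qed
  have P4: "exgpd_cdf \<sigma> \<xi> (exgpd_quantile \<sigma> \<xi> p) = p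
        \<and> integrable M (\<lambda>\<omega>. Y \<omega> * indicator {exgpd_quantile \<sigma> \<xi> p<..} (Y \<omega>))
        \<and> cond_tail_exp M Y (exgpd_quantile \<sigma> \<xi> p)
            = exgpd_quantile \<sigma> \<xi> p + mean_excess M Y (exgpd_quantile \<sigma> \<xi> p)"
    if p: "0 < p" "p < 1" for p
  proof -
    define q where "q = exgpd_quantile \<sigma> \<xi> p"
    have Q: "exgpd_cdf \<sigma> \<xi> q = p" "\<xi> < 0 \<Longrightarrow> q < ln (- \<sigma> / \<xi>)"
      using quant[OF sp p, of \<xi>] unfolding q_def by auto
    note C = core[OF Q(2)]
    have spos: "0 < exgpd_sf \<sigma> \<xi> q" by (rule sf_pos[OF sp Q(2)])
    have eq: "(\<lambda>\<omega>. Y \<omega> * indicator {q<..} (Y \<omega>)) = (\<lambda>\<omega>. (Y \<omega> - q) * indicator {q<..} (Y \<omega>) + q * indicator {q<..} (Y \<omega>))"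
      by (auto simp: fun_eq_iff algebra_simps)
    have int: "integrable M (\<lambda>\<omega>. Y \<omega> * indicator {q<..} (Y \<omega>))"
      unfolding eq using C by auto
    have "(\<integral>\<omega>. Y \<omega> * indicator {q<..} (Y \<omega>) \<partial>M) = Rf \<sigma> \<xi> q + q * exgpd_sf \<sigma> \<xi> q"
      unfolding eq using C by (subst Bochner_Integration.integral_add) auto
    moreover have mq: "mean_excess M Y q = Rf \<sigma> \<xi> q / exgpd_sf \<sigma> \<xi> q" by (rule me[OF Q(2)])
    ultimately have "cond_tail_exp M Y q = q + mean_excess M Y q"
      unfolding cond_tail_exp_def mq using C spos by (simp add: field_simps)
    then show ?thesis using Q(1) int unfolding q_def by simp
  qed
  show ?thesis using P1 P2 P3 P4 by blast
qed


end
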